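(* Let $r$ be an integer such that $6\le r<\frac nw-2$. For any sequence of $rw$ consecutive nodes of the $n$-cycle, the probability that a uniformly random $\{x,o\}$-labeling of the nodes contains an $x$-firewall incubator that starts among the leftmost $w$ nodes of the sequence and ends among its rightmost $w$ nodes is at least $c^r$, where $c>0$ is a constant independent of $r,w,n$.
   Context: Nodes of an $n$-cycle are indexed mod $n$, each labeled $x$ or $o$ (for a random labeling, independently with probability $1/2$ each). Associate the sign $+1$ to $x$ and $-1$ to $o$; the bias $\beta_0(i)$ of node $i$ is the sum of the signs of the labels of nodes $i-w,\dots,i+w$ (mod $n$). A block is a sequence of consecutive nodes. An $x$-firewall incubator is a block $F$ made up of three consecutive blocks $D_L,I,D_R$ (in this order, left to right) such that: (1) $D_L$ and $D_R$ each have exactly $w+1$ nodes; (2) $\beta_0(i)>\sqrt w$ for all $i\in F$; (3) the minimum of $\beta_0$ over $D_L$ is attained at the left endpoint of $D_L$, and the minimum of $\beta_0$ over $D_R$ is attained at the right endpoint of $D_R$. *)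

theory Defs
  imports Complex_Main
begin

text \<open>A labeling of the n-cycle is a bool list of length n; True = x (sign +1),
  False = o (sign -1). Nodes are integers taken mod n.\<close>

definition lab_sign :: "nat \<Rightarrow> bool list \<Rightarrow> int \<Rightarrow> int" where
  "lab_sign n xs i = (if xs ! nat (i mod int n) then 1 else -1)"

definition bias0 :: "nat \<Rightarrow> nat \<Rightarrow> bool list \<Rightarrow> int \<Rightarrow> int" where
  "bias0 n w xs i = (\<Sum>j\<in>{i - int w .. i + int w}. lab_sign n xs j)"

text \<open>x-firewall incubator F = D_L I D_R occupying nodes a, a+1, ..., a+L-1 (mod n):
  D_L = nodes a..a+w, D_R = nodes a+L-1-w .. a+L-1, I the (possibly empty) middle.\<close>

definition x_firewall_incubator :: "nat \<Rightarrow> nat \<Rightarrow> bool list \<Rightarrow> int \<Rightarrow> nat \<Rightarrow> bool" where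
  "x_firewall_incubator n w xs a L \<longleftrightarrow>
     2 * (w + 1) \<le> L \<and> L \<le> n \<and>
     (\<forall>i\<in>{a .. a + int L - 1}. real_of_int (bias0 n w xs i) > sqrt (real w)) \<and>
     (\<forall>i\<in>{a .. a + int w}. bias0 n w xs a \<le> bias0 n w xs i) \<and>
     (\<forall>i\<in>{a + int L - 1 - int w .. a + int L - 1}.
        bias0 n w xs (a + int L - 1) \<le> bias0 n w xs i)"

definition incubator_event :: "nat \<Rightarrow> nat \<Rightarrow> nat \<Rightarrow> int \<Rightarrow> bool list \<Rightarrow> bool" where
  "incubator_event n w r s xs \<longleftrightarrow>
     (\<exists>a L. a \<in> {s .. s + int w - 1} \<and>
            a + int L - 1 \<in> {s + int (r * w) - int w .. s + int (r * w) - 1} \<and>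
            x_firewall_incubator n w xs a L)"

definition incubator_prob :: "nat \<Rightarrow> nat \<Rightarrow> nat \<Rightarrow> int \<Rightarrow> real" where
  "incubator_prob n w r s =
     real (card {xs :: bool list. length xs = n \<and> incubator_event n w r s xs}) / 2 ^ n"

end

theory Submission
  imports Defs
begin


definition sg :: "bool \<Rightarrow> int" where "sg x = (if x then 1 else -1)"
definition lsum :: "bool list \<Rightarrow> int" where "lsum l = sum_list (map sg l)"

lemma lsum_simps[simp]: "lsum [] = 0" "lsum (x # l) = sg x + lsum l" "lsum (a @ b) = lsum a + lsum b"
  by (auto simp: lsum_def)

lemma sg_abs[simp]: "\<bar>sg x\<bar> = 1" "sg True = 1" "sg False = -1" by (auto simp: sg_def)

lemma lsum_abs: "\<bar>lsum l\<bar> \<le> int (length l)"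
  by (induction l) (auto simp: sg_def)

lemma lsum_map_Not[simp]: "lsum (map Not l) = - lsum l"
  by (induction l) (auto simp: sg_def)

lemma fin_len: "finite {l::bool list. length l = m}"
proof -
  have "{l::bool list. length l = m} = {l. set l \<subseteq> UNIV \<and> length l = m}" by auto
  then show ?thesis using finite_lists_length_eq[of "UNIV::bool set" m] by simp
qed

lemma card_len: "card {l::bool list. length l = m} = 2^m"
proof -
  have "{l::bool list. length l = m} = {l. set l \<subseteq> UNIV \<and> length l = m}" by auto
  then show ?thesis using card_lists_length_eq[of "UNIV::bool set" m] by (simp add: card_UNIV_bool)
qed

lemma len_Suc_eq: "{l::bool list. length l = Suc m \<and> P l} =
   Cons True ` {l. length l = m \<and> P (True # l)} \<union> Cons False ` {l. length l = m \<and> P (False # l)}"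
proof (rule set_eqI)
  fix l :: "bool list"
  show "l \<in> {l. length l = Suc m \<and> P l} \<longleftrightarrow> l \<in> Cons True ` {l. length l = m \<and> P (True # l)} \<union> Cons False ` {l. length l = m \<and> P (False # l)}"
  proof (cases l)
    case (Cons a list) then show ?thesis by (cases a) auto
  qed auto
qed

lemma card_Suc_split: "card {l::bool list. length l = Suc m \<and> P l} =
   card {l. length l = m \<and> P (True # l)} + card {l. length l = m \<and> P (False # l)}"
proof -
  have f1: "finite {l::bool list. length l = m \<and> P (True # l)}" by (rule finite_subset[OF _ fin_len[of m]]) auto
  have f2: "finite {l::bool list. length l = m \<and> P (False # l)}" by (rule finite_subset[OF _ fin_len[of m]]) auto
  show ?thesis unfolding len_Suc_eq
    by (subst card_Un_disjoint) (use f1 f2 in \<open>auto simp: card_image\<close>)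
qed

lemma sum_Suc_split: "(\<Sum>l\<in>{l::bool list. length l = Suc m}. f l) =
   (\<Sum>l\<in>{l. length l = m}. f (True # l)) + (\<Sum>l\<in>{l. length l = m}. f (False # l))"
proof -
  have "{l::bool list. length l = Suc m} = {l. length l = Suc m \<and> True}" by simp
  also have "\<dots> = Cons True ` {l. length l = m} \<union> Cons False ` {l. length l = m}"
    unfolding len_Suc_eq by simp
  finally have e: "{l::bool list. length l = Suc m} = Cons True ` {l. length l = m} \<union> Cons False ` {l. length l = m}" .
  show ?thesis unfolding e
    by (subst sum.union_disjoint) (auto simp: fin_len sum.reindex)
qed

lemma mom2: "(\<Sum>l\<in>{l::bool list. length l = m}. (real_of_int (lsum l))^2) = real m * 2^m"
proof (induction m)
  case 0
  have "{l::bool list. length l = 0} = {[]}" by auto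
  then show ?case by simp
next
  case (Suc m)
  have "(\<Sum>l\<in>{l::bool list. length l = Suc m}. (real_of_int (lsum l))^2)
     = (\<Sum>l\<in>{l. length l = m}. 2 * (real_of_int (lsum l))^2 + 2)"
    unfolding sum_Suc_split by (simp add: sum.distrib[symmetric] power2_eq_square algebra_simps)
  also have "\<dots> = 2 * (real m * 2^m) + 2 * 2^m"
    using Suc by (simp add: sum.distrib sum_distrib_left[symmetric] card_len)
  finally show ?case by (simp add: algebra_simps)
qed

lemma mom4: "(\<Sum>l\<in>{l::bool list. length l = m}. (real_of_int (lsum l))^4) = (3 * real m^2 - 2 * real m) * 2^m"
proof (induction m)
  case 0
  have "{l::bool list. length l = 0} = {[]}" by auto
  then show ?case by simp
next
  case (Suc m)
  have "(\<Sum>l\<in>{l::bool list. length l = Suc m}. (real_of_int (lsum l))^4)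
     = (\<Sum>l\<in>{l. length l = m}. 2 * (real_of_int (lsum l))^4 + 12 * (real_of_int (lsum l))^2 + 2)"
    unfolding sum_Suc_split by (simp add: sum.distrib[symmetric] power4_eq_xxxx power2_eq_square algebra_simps)
  also have "\<dots> = 2 * ((3 * real m^2 - 2 * real m) * 2^m) + 12 * (real m * 2^m) + 2 * 2^m"
    using Suc mom2[of m] by (simp add: sum.distrib sum_distrib_left[symmetric] card_len)
  finally show ?case by (simp add: algebra_simps power2_eq_square)
qed


lemma card_sym: "card {l::bool list. length l = m \<and> P l} = card {l. length l = m \<and> P (map Not l)}"
proof -
  have e: "map Not ` {l::bool list. length l = m \<and> P (map Not l)} = {l. length l = m \<and> P l}"
  proof (rule set_eqI)
    fix l :: "bool list"
    show "l \<in> map Not ` {l. length l = m \<and> P (map Not l)} \<longleftrightarrow> l \<in> {l. length l = m \<and> P l}"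
    proof
      assume "l \<in> map Not ` {l. length l = m \<and> P (map Not l)}"
      then obtain k where "l = map Not k" "length k = m" "P (map Not k)" by blast
      then show "l \<in> {l. length l = m \<and> P l}" by simp
    next
      assume "l \<in> {l. length l = m \<and> P l}"
      then have "map Not l \<in> {l. length l = m \<and> P (map Not l)}" "l = map Not (map Not l)" by (simp_all add: comp_def)
      then show "l \<in> map Not ` {l. length l = m \<and> P (map Not l)}" by (rule rev_image_eqI)
    qed
  qed
  have "inj_on (map Not) A" for A :: "bool list set"
    by (rule inj_on_inverseI[where g="map Not"]) (simp add: comp_def)
  then have "card (map Not ` {l::bool list. length l = m \<and> P (map Not l)}) = card {l::bool list. length l = m \<and> P (map Not l)}"
    by (rule card_image)
  then show ?thesis unfolding e .
qed

lemma fin_lenP: "finite {l::bool list. length l = m \<and> P l}"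
  by (rule finite_subset[OF _ fin_len[of m]]) auto

lemma half: "2^b \<le> 2 * card {l::bool list. length l = b \<and> 0 \<le> lsum l}"
proof -
  have "card {l::bool list. length l = b \<and> 0 \<le> lsum l} = card {l::bool list. length l = b \<and> lsum l \<le> 0}"
    by (subst card_sym) simp
  moreover have "{l::bool list. length l = b} = {l. length l = b \<and> 0 \<le> lsum l} \<union> {l. length l = b \<and> lsum l \<le> 0}" by auto
  then have "card {l::bool list. length l = b} \<le> card {l. length l = b \<and> 0 \<le> lsum l} + card {l. length l = b \<and> lsum l \<le> 0}"
    by (subst \<open>{l::bool list. length l = b} = _\<close>) (rule card_Un_le)
  ultimately show ?thesis by (simp add: card_len)
qed

definition hit :: "int \<Rightarrow> int \<Rightarrow> bool list \<Rightarrow> bool" where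
  "hit h m l \<longleftrightarrow> (\<exists>t. m \<le> h + lsum (take t l))"

lemma hit_Nil: "hit h m [] \<longleftrightarrow> m \<le> h" by (simp add: hit_def)
lemma hit_Cons: "h < m \<Longrightarrow> hit h m (x # l) \<longleftrightarrow> hit (h + sg x) m l"
  unfolding hit_def
proof
  assume "h < m" "\<exists>t. m \<le> h + lsum (take t (x # l))"
  then obtain t where t: "m \<le> h + lsum (take t (x # l))" by blast
  then show "\<exists>t. m \<le> h + sg x + lsum (take t l)"
    using \<open>h < m\<close> by (cases t) (auto simp: add.assoc)
next
  assume "\<exists>t. m \<le> h + sg x + lsum (take t l)"
  then obtain t where "m \<le> h + sg x + lsum (take t l)" by blast
  then show "\<exists>t. m \<le> h + lsum (take t (x # l))" by (intro exI[of _ "Suc t"]) (simp add: add.assoc)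
qed

lemma reflection: "card {l::bool list. length l = b \<and> hit h m l} \<le> 2 * card {l. length l = b \<and> m \<le> h + lsum l}"
proof (induction b arbitrary: h)
  case 0
  have "{l::bool list. length l = 0 \<and> hit h m l} = {l. length l = 0 \<and> m \<le> h + lsum l}"
    by (auto simp: hit_Nil)
  then show ?case by simp
next
  case (Suc b)
  show ?case
  proof (cases "m \<le> h")
    case True
    have "card {l::bool list. length l = Suc b \<and> hit h m l} \<le> 2^Suc b"
      using card_mono[OF fin_len, of "{l::bool list. length l = Suc b \<and> hit h m l}" "Suc b"]
      by (auto simp: card_len)
    also have "\<dots> \<le> 2 * card {l::bool list. length l = Suc b \<and> 0 \<le> lsum l}" by (rule half)
    also have "\<dots> \<le> 2 * card {l::bool list. length l = Suc b \<and> m \<le> h + lsum l}"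
      using True by (intro mult_left_mono card_mono fin_lenP) auto
    finally show ?thesis .
  next
    case False
    then have hm: "h < m" by simp
    have "card {l::bool list. length l = Suc b \<and> hit h m l} =
      card {l. length l = b \<and> hit (h+1) m l} + card {l. length l = b \<and> hit (h-1) m l}"
      by (subst card_Suc_split) (simp add: hit_Cons[OF hm])
    also have "\<dots> \<le> 2 * card {l. length l = b \<and> m \<le> (h+1) + lsum l} + 2 * card {l. length l = b \<and> m \<le> (h-1) + lsum l}"
      using Suc.IH[of "h+1"] Suc.IH[of "h-1"] by simp
    also have "\<dots> = 2 * card {l. length l = Suc b \<and> m \<le> h + lsum l}"
      by (subst card_Suc_split) (simp add: algebra_simps)
    finally show ?thesis .
  qed
qed

lemma cheb: assumes "m > 0"
  shows "real (card {l::bool list. length l = b \<and> m \<le> \<bar>lsum l\<bar>}) * (real_of_int m)^2 \<le> real b * 2^b"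
proof -
  let ?A = "{l::bool list. length l = b \<and> m \<le> \<bar>lsum l\<bar>}"
  have "real (card ?A) * (real_of_int m)^2 = (\<Sum>l\<in>?A. (real_of_int m)^2)" by simp
  also have "\<dots> \<le> (\<Sum>l\<in>?A. (real_of_int (lsum l))^2)"
  proof (rule sum_mono)
    fix l assume "l \<in> ?A"
    then have "real_of_int m \<le> \<bar>real_of_int (lsum l)\<bar>" by (metis (mono_tags) mem_Collect_eq of_int_abs of_int_le_iff)
    then show "(real_of_int m)^2 \<le> (real_of_int (lsum l))^2"
      using assms by (metis abs_le_square_iff abs_of_pos of_int_0_less_iff)
  qed
  also have "\<dots> \<le> (\<Sum>l\<in>{l::bool list. length l = b}. (real_of_int (lsum l))^2)"
    by (rule sum_mono2) (auto simp: fin_len)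
  finally show ?thesis by (simp add: mom2)
qed

lemma xtrans_helper: "3/16 * (x::real) \<le> a \<Longrightarrow> a \<le> 2 * p \<Longrightarrow> 3/32 * x \<le> p" by linarith

lemma posprob: assumes "b > 0"
  shows "3 / 32 * 2^b \<le> real (card {l::bool list. length l = b \<and> sqrt b / 2 \<le> real_of_int (lsum l)})"
proof -
  let ?U = "{l::bool list. length l = b}"
  let ?A = "{l::bool list. length l = b \<and> real b / 4 \<le> (real_of_int (lsum l))^2}"
  let ?P = "{l::bool list. length l = b \<and> sqrt b / 2 \<le> real_of_int (lsum l)}"
  let ?Q = "{l::bool list. length l = b \<and> sqrt b / 2 \<le> - real_of_int (lsum l)}"
  have bp: "real b > 0" using assms by simp
  have pt: "(real_of_int (lsum l))^2 \<le> real b / 4 + (if l \<in> ?A then (real_of_int (lsum l))^4 / (8 * real b) else 0) + (if l \<in> ?A then 2 * real b else 0)"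
    if "l \<in> ?U" for l
  proof (cases "l \<in> ?A")
    case True
    have "0 \<le> ((real_of_int (lsum l))^2 - 4 * real b)^2" by simp
    then have "8 * real b * (real_of_int (lsum l))^2 \<le> (real_of_int (lsum l))^4 + 16 * (real b)^2"
      by (simp add: power2_eq_square power4_eq_xxxx algebra_simps)
    then have "(real_of_int (lsum l))^2 \<le> (real_of_int (lsum l))^4 / (8 * real b) + 2 * real b"
      using bp by (simp add: field_simps power2_eq_square)
    then show ?thesis using True bp by simp
  next
    case False then show ?thesis using that by auto
  qed
  have "real b * 2^b = (\<Sum>l\<in>?U. (real_of_int (lsum l))^2)" by (simp add: mom2)
  also have "\<dots> \<le> (\<Sum>l\<in>?U. real b / 4 + (if l \<in> ?A then (real_of_int (lsum l))^4 / (8 * real b) else 0) + (if l \<in> ?A then 2 * real b else 0))"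
    by (rule sum_mono) (rule pt)
  also have "\<dots> = real b / 4 * 2^b + (\<Sum>l\<in>?U. (if l \<in> ?A then (real_of_int (lsum l))^4 / (8 * real b) else 0))
       + (\<Sum>l\<in>?U. (if l \<in> ?A then 2 * real b else 0))"
    by (simp only: sum.distrib) (simp add: card_len)
  also have "(\<Sum>l\<in>?U. (if l \<in> ?A then (real_of_int (lsum l))^4 / (8 * real b) else 0)) \<le> (\<Sum>l\<in>?U. (real_of_int (lsum l))^4 / (8 * real b))"
    by (rule sum_mono) (simp add: bp)
  also have "\<dots> = (3 * real b^2 - 2 * real b) * 2^b / (8 * real b)"
    by (simp add: sum_divide_distrib[symmetric] mom4)
  also have "(\<Sum>l\<in>?U. (if l \<in> ?A then 2 * real b else 0)) = 2 * real b * card ?A"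
    by (simp add: sum.If_cases fin_len Int_def conj_commute)
  finally have "real b * 2^b \<le> real b / 4 * 2^b + (3 * real b^2 - 2 * real b) * 2^b / (8 * real b) + 2 * real b * card ?A"
    by simp
  also have "(3 * real b^2 - 2 * real b) * 2^b / (8 * real b) \<le> 3 * real b * 2^b / 8"
    using bp by (simp add: field_simps power2_eq_square)
  finally have "real b * 2^b \<le> real b / 4 * 2^b + 3 * real b * 2^b / 8 + 2 * real b * card ?A" by simp
  then have "real b * (3 / 16 * 2^b) \<le> real b * real (card ?A)" by (simp add: algebra_simps)
  then have A: "3 / 16 * 2^b \<le> real (card ?A)" using bp by (simp only: mult_le_cancel_left_pos)
  have "?A \<subseteq> ?P \<union> ?Q"
  proof
    fix l assume "l \<in> ?A"
    then have "sqrt (real b / 4) \<le> \<bar>real_of_int (lsum l)\<bar>" by (simp add: real_le_lsqrt real_sqrt_le_iff)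
    moreover have "sqrt (real b / 4) = sqrt b / 2" by (simp add: real_sqrt_divide)
    ultimately have "sqrt b / 2 \<le> \<bar>real_of_int (lsum l)\<bar>" by simp
    then have "sqrt b / 2 \<le> real_of_int (lsum l) \<or> sqrt b / 2 \<le> - real_of_int (lsum l)" by linarith
    then show "l \<in> ?P \<union> ?Q" using \<open>l \<in> ?A\<close> by blast
  qed
  then have "card ?A \<le> card (?P \<union> ?Q)" by (intro card_mono) (simp_all add: fin_lenP)
  also have "\<dots> \<le> card ?P + card ?Q" by (rule card_Un_le)
  finally have "card ?A \<le> card ?P + card ?Q" .
  moreover have "card ?Q = card ?P" by (subst card_sym) simp
  ultimately have "card ?A \<le> 2 * card ?P" by simp
  then have "real (card ?A) \<le> real (2 * card ?P)" by (rule of_nat_mono)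
  then have "real (card ?A) \<le> 2 * real (card ?P)" by simp
  from A this show ?thesis by (rule xtrans_helper)
qed


definition Gb :: "nat \<Rightarrow> bool list set" where
  "Gb b = {l. length l = b \<and> sqrt b / 2 \<le> real_of_int (lsum l) \<and> (\<forall>t. real_of_int \<bar>lsum (take t l)\<bar> \<le> 5 * sqrt b)}"

lemma lsum_take_Not: "lsum (take t (map Not l)) = - lsum (take t l)"
  by (simp add: take_map)

lemma Gb_card: assumes "b > 0" shows "11 / 800 * 2^b \<le> real (card (Gb b))"
proof -
  define m where "m = \<lfloor>5 * sqrt b\<rfloor> + 1"
  have m5: "5 * sqrt b < real_of_int m" unfolding m_def by linarith
  have "0 \<le> 5 * sqrt (real b)" by simp
  then have "0 \<le> \<lfloor>5 * sqrt (real b)\<rfloor>" by simp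
  then have mpos: "m > 0" unfolding m_def by simp
  let ?bad = "{l::bool list. length l = b \<and> (\<exists>t. m \<le> \<bar>lsum (take t l)\<bar>)}"
  let ?H = "{l::bool list. length l = b \<and> hit 0 m l}"
  let ?H' = "{l::bool list. length l = b \<and> hit 0 m (map Not l)}"
  let ?Pm = "{l::bool list. length l = b \<and> m \<le> lsum l}"
  let ?Nm = "{l::bool list. length l = b \<and> m \<le> - lsum l}"
  let ?Am = "{l::bool list. length l = b \<and> m \<le> \<bar>lsum l\<bar>}"
  let ?Pos = "{l::bool list. length l = b \<and> sqrt b / 2 \<le> real_of_int (lsum l)}"
  have "?bad \<subseteq> ?H \<union> ?H'"
  proof
    fix l assume "l \<in> ?bad"
    then obtain t where "length l = b" "m \<le> \<bar>lsum (take t l)\<bar>" by blast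
    then show "l \<in> ?H \<union> ?H'" unfolding hit_def lsum_take_Not
      by (cases "0 \<le> lsum (take t l)") auto
  qed
  then have "card ?bad \<le> card (?H \<union> ?H')" by (intro card_mono) (simp_all add: fin_lenP)
  also have "\<dots> \<le> card ?H + card ?H'" by (rule card_Un_le)
  also have "card ?H' = card ?H" by (subst card_sym) (simp add: comp_def)
  finally have b1: "card ?bad \<le> 2 * card ?H" by simp
  have b2: "card ?H \<le> 2 * card ?Pm" using reflection[of b 0 m] by simp
  have "?Am = ?Pm \<union> ?Nm" by auto
  moreover have "?Pm \<inter> ?Nm = {}" using mpos by auto
  ultimately have "card ?Am = card ?Pm + card ?Nm" by (simp add: card_Un_disjoint fin_lenP)
  moreover have "card ?Nm = card ?Pm" by (subst card_sym) simp
  ultimately have b3: "card ?Am = 2 * card ?Pm" by simp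
  have "card ?bad \<le> 2 * card ?Am" using b1 b2 b3 by simp
  then have B1: "real (card ?bad) \<le> 2 * real (card ?Am)"
    using of_nat_mono by fastforce
  have ch: "real (card ?Am) * (real_of_int m)^2 \<le> real b * 2^b" by (rule cheb[OF mpos])
  have "(5 * sqrt b)^2 \<le> (real_of_int m)^2"
    using m5 by (intro power_mono) auto
  then have m25: "25 * real b \<le> (real_of_int m)^2" by (simp add: power_mult_distrib)
  have bp: "real b > 0" using assms by simp
  have "real (card ?Am) * (25 * real b) \<le> real (card ?Am) * (real_of_int m)^2"
    using m25 by (intro mult_left_mono) auto
  with ch have "real (card ?Am) * (25 * real b) \<le> real b * 2^b" by linarith
  then have "real (card ?Am) * 25 \<le> 2^b" using bp by (simp add: algebra_simps)
  with B1 have Bad: "real (card ?bad) \<le> 2 / 25 * 2^b" by linarith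
  have Pos: "3 / 32 * 2^b \<le> real (card ?Pos)" by (rule posprob[OF assms])
  have "?Pos \<subseteq> Gb b \<union> ?bad"
  proof
    fix l assume l: "l \<in> ?Pos"
    show "l \<in> Gb b \<union> ?bad"
    proof (cases "l \<in> ?bad")
      case False
      then have lt: "\<forall>t. \<bar>lsum (take t l)\<bar> < m" using l by (auto simp: not_le)
      have "\<forall>t. real_of_int \<bar>lsum (take t l)\<bar> \<le> 5 * sqrt b"
      proof
        fix t
        have "\<bar>lsum (take t l)\<bar> \<le> \<lfloor>5 * sqrt (real b)\<rfloor>" using lt unfolding m_def by auto
        then show "real_of_int \<bar>lsum (take t l)\<bar> \<le> 5 * sqrt b" by (simp add: le_floor_iff)
      qed
      then show ?thesis using l by (simp add: Gb_def)
    qed simp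
  qed
  then have "card ?Pos \<le> card (Gb b \<union> ?bad)" by (intro card_mono) (simp_all add: fin_lenP Gb_def)
  also have "\<dots> \<le> card (Gb b) + card ?bad" by (rule card_Un_le)
  finally have "real (card ?Pos) \<le> real (card (Gb b)) + real (card ?bad)"
    using of_nat_mono by fastforce
  with Pos Bad show ?thesis by linarith
qed


definition app :: "bool list set \<Rightarrow> bool list set \<Rightarrow> bool list set" where
  "app A B = {a @ c | a c. a \<in> A \<and> c \<in> B}"

lemma app_image: "app A B = (\<lambda>(a, c). a @ c) ` (A \<times> B)"
  unfolding app_def by auto

lemma card_app: assumes "\<forall>a\<in>A. length a = k" "finite A" "finite B"
  shows "card (app A B) = card A * card B"
proof -
  have "inj_on (\<lambda>(a, c). a @ c) (A \<times> B)"
    by (rule inj_onI) (use assms(1) in auto)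
  then show ?thesis unfolding app_image by (simp add: card_image card_cartesian_product)
qed

lemma fin_app: "finite A \<Longrightarrow> finite B \<Longrightarrow> finite (app A B)"
  unfolding app_image by simp

fun chain :: "nat \<Rightarrow> nat \<Rightarrow> nat \<Rightarrow> bool list set" where
  "chain 0 b \<rho> = {l. length l = \<rho>}"
| "chain (Suc m) b \<rho> = app (Gb b) (chain m b \<rho>)"

lemma Gb_fin: "finite (Gb b)"
  unfolding Gb_def by (rule finite_subset[OF _ fin_len[of b]]) auto

lemma chain_len: "l \<in> chain m b \<rho> \<Longrightarrow> length l = m * b + \<rho>"
  by (induction m arbitrary: l) (auto simp: app_def Gb_def)

lemma chain_fin: "finite (chain m b \<rho>)"
  by (induction m) (auto simp: fin_len fin_app Gb_fin)

lemma chain_card: assumes "b > 0"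
  shows "(11/800)^m * 2^(m * b + \<rho>) \<le> real (card (chain m b \<rho>))"
proof (induction m)
  case 0
  then show ?case by (simp add: card_len)
next
  case (Suc m)
  have "card (chain (Suc m) b \<rho>) = card (Gb b) * card (chain m b \<rho>)"
    by simp (rule card_app[where k=b], simp add: Gb_def, rule Gb_fin, rule chain_fin)
  then have "real (card (chain (Suc m) b \<rho>)) = real (card (Gb b)) * real (card (chain m b \<rho>))" by simp
  moreover have "11 / 800 * 2^b * ((11/800)^m * 2^(m * b + \<rho>)) \<le> real (card (Gb b)) * real (card (chain m b \<rho>))"
    by (rule mult_mono[OF Gb_card[OF assms] Suc]) auto
  moreover have "(11/800)^Suc m * (2::real)^(Suc m * b + \<rho>) = 11 / 800 * 2^b * ((11/800)^m * 2^(m * b + \<rho>))"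
    by (simp add: power_add algebra_simps)
  ultimately show ?case by (simp only: chain.simps)
qed

lemma Gb_props: assumes "a \<in> Gb b"
  shows "length a = b" "\<And>t. - 5 * sqrt b \<le> real_of_int (lsum (take t a))"
    "\<And>t. - 5 * sqrt b \<le> real_of_int (lsum (drop t a))"
    "sqrt b / 2 \<le> real_of_int (lsum a)" "real_of_int (lsum a) \<le> 5 * sqrt b"
proof -
  have A: "\<And>t. real_of_int \<bar>lsum (take t a)\<bar> \<le> 5 * sqrt b" and S: "sqrt b / 2 \<le> real_of_int (lsum a)"
    and L: "length a = b"
    using assms by (auto simp: Gb_def)
  show "length a = b" by (rule L)
  show "sqrt b / 2 \<le> real_of_int (lsum a)" by (rule S)
  fix t
  show "- 5 * sqrt b \<le> real_of_int (lsum (take t a))" using A[of t] by linarith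
  have "lsum (drop t a) = lsum a - lsum (take t a)"
    by (metis append_take_drop_id lsum_simps(3) add_diff_cancel_left')
  moreover have "0 \<le> sqrt (real b)" by simp
  ultimately show "- 5 * sqrt b \<le> real_of_int (lsum (drop t a))" using A[of t] S by simp
next
  have A: "real_of_int \<bar>lsum (take (length a) a)\<bar> \<le> 5 * sqrt b" using assms unfolding Gb_def by blast
  then show "real_of_int (lsum a) \<le> 5 * sqrt b" by simp
qed

lemma chain_props0: "l \<in> chain m b \<rho> \<Longrightarrow> (\<forall>t. - (5 * sqrt b + \<rho>) \<le> real_of_int (lsum (take t l))
     \<and> - (5 * sqrt b + \<rho>) \<le> real_of_int (lsum (drop t l))) \<and>
    real m * sqrt b / 2 - \<rho> \<le> real_of_int (lsum l) \<and>
    real_of_int (lsum l) \<le> 5 * real m * sqrt b + \<rho>"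
proof (induction m arbitrary: l)
  case 0
  have sp: "0 \<le> sqrt (real b)" by simp
  have A: "\<forall>t. - (5 * sqrt b + \<rho>) \<le> real_of_int (lsum (take t l)) \<and> - (5 * sqrt b + \<rho>) \<le> real_of_int (lsum (drop t l))"
  proof
    fix t
    have c1: "\<bar>lsum (take t l)\<bar> \<le> int \<rho>" using lsum_abs[of "take t l"] 0 by simp
    have c2: "\<bar>lsum (drop t l)\<bar> \<le> int \<rho>" using lsum_abs[of "drop t l"] 0 by simp
    have "real_of_int \<bar>lsum (take t l)\<bar> \<le> real \<rho>" "real_of_int \<bar>lsum (drop t l)\<bar> \<le> real \<rho>"
      using c1 c2 by (metis of_int_le_iff of_int_of_nat_eq)+
    then show "- (5 * sqrt b + \<rho>) \<le> real_of_int (lsum (take t l)) \<and> - (5 * sqrt b + \<rho>) \<le> real_of_int (lsum (drop t l))"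
      using sp by (simp only: of_int_abs) linarith
  qed
  have "\<bar>lsum l\<bar> \<le> int \<rho>" using lsum_abs[of l] 0 by simp
  then have "real_of_int \<bar>lsum l\<bar> \<le> real \<rho>" by (metis of_int_le_iff of_int_of_nat_eq)
  then have "- real \<rho> \<le> real_of_int (lsum l) \<and> real_of_int (lsum l) \<le> real \<rho>" by linarith
  then show ?case using A by simp
next
  case (Suc m)
  from Suc.prems obtain a c where l: "l = a @ c" and a: "a \<in> Gb b" and c: "c \<in> chain m b \<rho>"
    by (auto simp: app_def)
  note ap = Gb_props[OF a]
  have IH: "(\<forall>t. - (5 * sqrt b + \<rho>) \<le> real_of_int (lsum (take t c))
     \<and> - (5 * sqrt b + \<rho>) \<le> real_of_int (lsum (drop t c)))"
    "real m * sqrt b / 2 - \<rho> \<le> real_of_int (lsum c)"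
    "real_of_int (lsum c) \<le> 5 * real m * sqrt b + \<rho>" using Suc.IH[OF c] by auto
  have sp: "0 \<le> sqrt (real b)" by simp
  have A: "\<forall>t. - (5 * sqrt b + \<rho>) \<le> real_of_int (lsum (take t l)) \<and> - (5 * sqrt b + \<rho>) \<le> real_of_int (lsum (drop t l))"
  proof
    fix t
    show "- (5 * sqrt b + \<rho>) \<le> real_of_int (lsum (take t l)) \<and> - (5 * sqrt b + \<rho>) \<le> real_of_int (lsum (drop t l))"
    proof (cases "t \<le> b")
      case True
      have "take t l = take t a" using True ap(1) l by simp
      moreover have "drop t l = drop t a @ c" using True ap(1) l by simp
      moreover have "0 \<le> real m * sqrt b / 2" by simp
      ultimately show ?thesis using ap(2)[of t] ap(3)[of t] IH(2) by (simp; linarith)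
    next
      case False
      have "take t l = a @ take (t - b) c" using False ap(1) l by simp
      moreover have "drop t l = drop (t - b) c" using False ap(1) l by simp
      moreover have "0 \<le> real_of_int (lsum a)" using ap(4) sp by linarith
      moreover note IH(1)[rule_format, of "t - b"]
      ultimately show ?thesis by (simp; linarith)
    qed
  qed
  have "real (Suc m) * sqrt b / 2 - \<rho> \<le> real_of_int (lsum l)"
    using ap(4) IH(2) l by (simp add: algebra_simps add_divide_distrib)
  moreover have "real_of_int (lsum l) \<le> 5 * real (Suc m) * sqrt b + \<rho>"
    using ap(5) IH(3) l by (simp add: algebra_simps)
  ultimately show ?case using A by blast
qed


definition SB :: "nat \<Rightarrow> nat \<Rightarrow> bool list set" where
  "SB w K = chain K (w div K) (w mod K)"

lemma SB_len: "Z \<in> SB w K \<Longrightarrow> length Z = w"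
  unfolding SB_def by (drule chain_len) simp

lemma SB_fin: "finite (SB w K)" unfolding SB_def by (rule chain_fin)

lemma SB_card: assumes "K \<le> w" "0 < K"
  shows "(11/800)^K * 2^w \<le> real (card (SB w K))"
proof -
  have "0 < w div K" using assms by (simp add: div_greater_zero_iff)
  from chain_card[OF this, of K "w mod K"] show ?thesis unfolding SB_def by simp
qed

lemma sqrt_bounds: assumes "K = c * c" "0 < c" 
  shows "real c * sqrt (real (w div K)) \<le> sqrt (real w)"
        "sqrt (real w) \<le> real c * (sqrt (real (w div K)) + 1)"
proof -
  have cp: "0 < real c" using assms by simp
  have "K * (w div K) \<le> w" by simp
  then have "real K * real (w div K) \<le> real w" by (metis of_nat_le_iff of_nat_mult)
  moreover have "(real c * sqrt (real (w div K)))^2 = real K * real (w div K)"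
    using assms by (simp add: power_mult_distrib) (simp add: power2_eq_square)
  ultimately have "(real c * sqrt (real (w div K)))^2 \<le> real w" by simp
  then show "real c * sqrt (real (w div K)) \<le> sqrt (real w)"
    using real_le_rsqrt by blast
  have "w < K * (w div K + 1)" using assms by (simp add: dividend_less_times_div)
  then have "real w \<le> real K * (real (w div K) + 1)" by (metis less_imp_le of_nat_Suc of_nat_le_iff of_nat_mult Suc_eq_plus1 add.commute)
  also have "\<dots> \<le> real K * (sqrt (real (w div K)) + 1)^2"
  proof -
    have "real (w div K) + 1 \<le> (sqrt (real (w div K)) + 1)^2"
      by (simp add: power2_eq_square algebra_simps)
    then show ?thesis using assms by (intro mult_left_mono) auto
  qed
  also have "\<dots> = (real c * (sqrt (real (w div K)) + 1))^2" using assms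
    by (simp add: power_mult_distrib) (simp add: power2_eq_square)
  finally have "sqrt (real w) \<le> sqrt ((real c * (sqrt (real (w div K)) + 1))^2)" by (rule real_sqrt_le_mono)
  also have "\<dots> = real c * (sqrt (real (w div K)) + 1)" using cp by (simp only: real_sqrt_abs) simp
  finally show "sqrt (real w) \<le> real c * (sqrt (real (w div K)) + 1)" .
qed

lemma SB_bounds: assumes "Z \<in> SB w K" "0 < K"
  shows "\<forall>t. - (5 * sqrt (real (w div K)) + K) \<le> real_of_int (lsum (take t Z))
     \<and> - (5 * sqrt (real (w div K)) + K) \<le> real_of_int (lsum (drop t Z))"
    "real K * sqrt (real (w div K)) / 2 - K \<le> real_of_int (lsum Z)"
    "real_of_int (lsum Z) \<le> 5 * real K * sqrt (real (w div K)) + K"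
proof -
  have r: "real (w mod K) \<le> real K" using assms by simp
  note c = chain_props0[OF assms(1)[unfolded SB_def]]
  show "\<forall>t. - (5 * sqrt (real (w div K)) + K) \<le> real_of_int (lsum (take t Z))
     \<and> - (5 * sqrt (real (w div K)) + K) \<le> real_of_int (lsum (drop t Z))"
  proof
    fix t show "- (5 * sqrt (real (w div K)) + K) \<le> real_of_int (lsum (take t Z))
     \<and> - (5 * sqrt (real (w div K)) + K) \<le> real_of_int (lsum (drop t Z))"
      using c[THEN conjunct1, rule_format, of t] r by linarith
  qed
  show "real K * sqrt (real (w div K)) / 2 - K \<le> real_of_int (lsum Z)" using c r by linarith
  show "real_of_int (lsum Z) \<le> 5 * real K * sqrt (real (w div K)) + K" using c r by linarith
qed


fun rset :: "nat \<Rightarrow> nat list \<Rightarrow> bool list set" where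
  "rset w [] = {[]}"
| "rset w (K # Ks) = app (SB w K) (rset w Ks)"

lemma rset_concat: "y \<in> rset w Ks \<Longrightarrow> \<exists>Zs. y = concat Zs \<and> length Zs = length Ks \<and> (\<forall>j<length Ks. Zs ! j \<in> SB w (Ks ! j))"
proof (induction Ks arbitrary: y)
  case Nil then show ?case by simp
next
  case (Cons K Ks)
  then obtain a c where y: "y = a @ c" "a \<in> SB w K" "c \<in> rset w Ks" by (auto simp: app_def)
  from Cons.IH[OF y(3)] obtain Zs where Zs: "c = concat Zs" "length Zs = length Ks" "\<forall>j<length Ks. Zs ! j \<in> SB w (Ks ! j)" by blast
  show ?case
  proof (intro exI[of _ "a # Zs"] conjI allI impI)
    fix j assume "j < length (K # Ks)"
    then show "(a # Zs) ! j \<in> SB w ((K # Ks) ! j)" using Zs y by (cases j) auto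
  qed (use y Zs in auto)
qed

lemma rset_len: "y \<in> rset w Ks \<Longrightarrow> length y = w * length Ks"
  by (induction Ks arbitrary: y) (auto simp: app_def SB_len)

lemma rset_fin: "finite (rset w Ks)"
  by (induction Ks) (auto simp: fin_app SB_fin)

definition qq :: real where "qq = 11/800"
definition gam :: real where "gam = qq ^ 65536"

lemma qq_pos: "0 < qq" "qq \<le> 1" by (simp_all add: qq_def)
lemma gam_pos: "0 < gam" unfolding gam_def using qq_pos(1) by (rule zero_less_power)
lemma gam_le: "K \<le> 65536 \<Longrightarrow> gam \<le> qq ^ K"
  unfolding gam_def by (rule power_decreasing) (use qq_pos in auto)

lemma rset_card: assumes "\<forall>K\<in>set Ks. 0 < K \<and> K \<le> w \<and> K \<le> 65536"
  shows "(gam * 2^w)^length Ks \<le> real (card (rset w Ks))"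
  using assms
proof (induction Ks)
  case Nil then show ?case by simp
next
  case (Cons K Ks)
  have K: "0 < K" "K \<le> w" "K \<le> 65536" using Cons.prems by auto
  have "card (rset w (K # Ks)) = card (SB w K) * card (rset w Ks)"
    by simp (rule card_app[where k=w], simp add: SB_len, rule SB_fin, rule rset_fin)
  then have e: "real (card (rset w (K # Ks))) = real (card (SB w K)) * real (card (rset w Ks))" by simp
  have "gam * 2^w \<le> qq ^ K * 2^w" using gam_le[OF K(3)] by (intro mult_right_mono) auto
  also have "\<dots> \<le> real (card (SB w K))"
    using SB_card[OF K(2) K(1)] unfolding qq_def .
  finally have "gam * 2^w \<le> real (card (SB w K))" .
  moreover have "(gam * 2^w)^length Ks \<le> real (card (rset w Ks))" using Cons by simp
  moreover have "0 \<le> gam * 2^w" using gam_pos by simp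
  ultimately have "gam * 2^w * (gam * 2^w)^length Ks \<le> real (card (SB w K)) * real (card (rset w Ks))"
    by (intro mult_mono) auto
  then show ?case using e by simp
qed

lemma drop_concat_eq: "(\<forall>Z\<in>set Zs. length Z = w) \<Longrightarrow> k \<le> length Zs \<Longrightarrow> drop (k * w) (concat Zs) = concat (drop k Zs)"
proof (induction k arbitrary: Zs)
  case 0 then show ?case by simp
next
  case (Suc k)
  then obtain Z Zs' where Zs: "Zs = Z # Zs'" by (cases Zs) auto
  then have "drop (Suc k * w) (concat Zs) = drop (k*w) (concat Zs')" using Suc.prems(1) by simp
  also have "\<dots> = concat (drop k Zs')" using Suc.IH[of Zs'] Suc.prems Zs by simp
  finally show ?case using Zs by simp
qed

lemma take_len_append: "take (length A + m) (A @ Y) = A @ take m Y" by simp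

lemma window: assumes "\<forall>Z\<in>set Zs. length Z = w" "k + 2 < length Zs" "u < w"
  shows "take (2*w+1) (drop (k*w+u) (concat Zs)) = drop u (Zs!k) @ Zs!(k+1) @ take (u+1) (Zs!(k+2))"
proof -
  have d: "drop (k * w) (concat Zs) = concat (drop k Zs)" using assms by (intro drop_concat_eq) auto
  have dk: "drop k Zs = Zs!k # Zs!(k+1) # Zs!(k+2) # drop (Suc (Suc (Suc k))) Zs"
  proof -
    have "drop k Zs = Zs!k # drop (Suc k) Zs" by (rule Cons_nth_drop_Suc[symmetric]) (use assms(2) in simp)
    moreover have "drop (Suc k) Zs = Zs!(Suc k) # drop (Suc (Suc k)) Zs" by (rule Cons_nth_drop_Suc[symmetric]) (use assms(2) in simp)
    moreover have "drop (Suc (Suc k)) Zs = Zs!(Suc (Suc k)) # drop (Suc (Suc (Suc k))) Zs" by (rule Cons_nth_drop_Suc[symmetric]) (use assms(2) in simp)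
    ultimately show ?thesis by simp
  qed
  have l: "length (Zs!k) = w" "length (Zs!(k+1)) = w" "length (Zs!(k+2)) = w" using assms by auto
  have "drop (k*w+u) (concat Zs) = drop u (drop (k*w) (concat Zs))" by (simp add: add.commute)
  also have "\<dots> = drop u (Zs!k) @ Zs!(k+1) @ Zs!(k+2) @ concat (drop (Suc (Suc (Suc k))) Zs)"
    unfolding d dk using l assms(3) by simp
  finally have e: "drop (k*w+u) (concat Zs) = drop u (Zs!k) @ Zs!(k+1) @ Zs!(k+2) @ concat (drop (Suc (Suc (Suc k))) Zs)" .
  have n: "2*w+1 = length (drop u (Zs!k)) + (length (Zs!(k+1)) + (u+1))" using l assms(3) by simp
  have t2: "take (u+1) (Zs!(k+2) @ Y) = take (u+1) (Zs!(k+2))" for Y using l assms(3) by simp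
  show ?thesis apply (subst e) apply (subst n) apply (subst take_len_append) apply (subst take_len_append) apply (subst t2) apply (rule refl) done
qed


lemma sqrt_big: assumes "17179869184 \<le> w" shows "131072 \<le> sqrt (real w)"
proof -
  have "(131072::real)^2 \<le> real w" using assms by simp
  then show ?thesis by (rule real_le_rsqrt)
qed

lemma sbinfo64: assumes Z: "Z \<in> SB w 64" and w: "17179869184 \<le> w"
  shows "\<forall>t. - (5 * sqrt w / 8 + 65536) \<le> real_of_int (lsum (take t Z)) \<and> - (5 * sqrt w / 8 + 65536) \<le> real_of_int (lsum (drop t Z))"
    "4 * sqrt w - 96 \<le> real_of_int (lsum Z)"
    "real_of_int (lsum Z) \<le> 40 * sqrt w + 64"
proof -
  have a: "real 8 * sqrt (real (w div 64)) \<le> sqrt (real w)" "sqrt (real w) \<le> real 8 * (sqrt (real (w div 64)) + 1)"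
    using sqrt_bounds[of 64 8 w] by auto
  note b = SB_bounds[OF Z, simplified]
  show "\<forall>t. - (5 * sqrt w / 8 + 65536) \<le> real_of_int (lsum (take t Z)) \<and> - (5 * sqrt w / 8 + 65536) \<le> real_of_int (lsum (drop t Z))"
  proof
    fix t show "- (5 * sqrt w / 8 + 65536) \<le> real_of_int (lsum (take t Z)) \<and> - (5 * sqrt w / 8 + 65536) \<le> real_of_int (lsum (drop t Z))"
      using b(1)[rule_format, of t] a by simp
  qed
  show "4 * sqrt w - 96 \<le> real_of_int (lsum Z)" using b(2) a by simp
  show "real_of_int (lsum Z) \<le> 40 * sqrt w + 64" using b(3) a by simp
qed

lemma sbinfo2: assumes Z: "Z \<in> SB w 65536" and w: "17179869184 \<le> w"
  shows "\<forall>t. - (5 * sqrt w / 8 + 65536) \<le> real_of_int (lsum (take t Z)) \<and> - (5 * sqrt w / 8 + 65536) \<le> real_of_int (lsum (drop t Z))"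
    "4 * sqrt w - 96 \<le> real_of_int (lsum Z)"
    "128 * sqrt w - 98304 \<le> real_of_int (lsum Z)"
proof -
  have X: "131072 \<le> sqrt (real w)" by (rule sqrt_big[OF w])
  have sp: "0 \<le> sqrt (real (w div 65536))" by simp
  have a: "real 256 * sqrt (real (w div 65536)) \<le> sqrt (real w)" "sqrt (real w) \<le> real 256 * (sqrt (real (w div 65536)) + 1)"
    using sqrt_bounds[of 65536 256 w] by auto
  note b = SB_bounds[OF Z, simplified]
  show "\<forall>t. - (5 * sqrt w / 8 + 65536) \<le> real_of_int (lsum (take t Z)) \<and> - (5 * sqrt w / 8 + 65536) \<le> real_of_int (lsum (drop t Z))"
  proof
    fix t show "- (5 * sqrt w / 8 + 65536) \<le> real_of_int (lsum (take t Z)) \<and> - (5 * sqrt w / 8 + 65536) \<le> real_of_int (lsum (drop t Z))"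
    proof -
      have "5 * sqrt (real (w div 65536)) \<le> 5 * sqrt w / 8" using a sp by linarith
      then show ?thesis using b(1)[rule_format, of t] by linarith
    qed
  qed
  show "128 * sqrt w - 98304 \<le> real_of_int (lsum Z)" using b(2) a by simp
  then show "4 * sqrt w - 96 \<le> real_of_int (lsum Z)" using X by simp
qed


definition Bv :: "nat \<Rightarrow> bool list \<Rightarrow> nat \<Rightarrow> int" where
  "Bv w y p = lsum (take (2*w+1) (drop p y))"

definition tys :: "nat \<Rightarrow> nat list" where
  "tys r = map (\<lambda>j. if j = 2 \<or> j = r - 1 then 65536 else 64) [0..<r+2]"

lemma tys_nth: "j < r + 2 \<Longrightarrow> tys r ! j = (if j = 2 \<or> j = r - 1 then 65536 else 64)"
  unfolding tys_def by (simp del: upt_Suc)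

lemma tys_len: "length (tys r) = r + 2" unfolding tys_def by simp

lemma region_good: assumes y: "y \<in> rset w (tys r)" and r: "6 \<le> r" and w: "17179869184 \<le> w"
  shows "\<forall>p<r*w. sqrt w < real_of_int (Bv w y p)"
    "\<forall>u<w. Bv w y 0 \<le> Bv w y (w+u)"
    "\<forall>u<w. Bv w y (r*w - 1) \<le> Bv w y ((r-2)*w+u)"
proof -
  obtain Zs where Zs: "y = concat Zs" "length Zs = r + 2" "\<forall>j<r+2. Zs ! j \<in> SB w (tys r ! j)"
    using rset_concat[OF y] tys_len by metis
  have SBj: "Zs ! j \<in> SB w (if j = 2 \<or> j = r - 1 then 65536 else 64)" if "j < r + 2" for j
    using Zs(3)[rule_format, OF that] unfolding tys_nth[OF that] .
  have lens: "\<forall>Z\<in>set Zs. length Z = w"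
  proof
    fix Z assume "Z \<in> set Zs"
    then obtain j where "j < length Zs" "Z = Zs ! j" by (metis in_set_conv_nth)
    then show "length Z = w" using SBj[of j] Zs(2) SB_len by auto
  qed
  define X where "X = sqrt (real w)"
  have X: "131072 \<le> X" unfolding X_def by (rule sqrt_big[OF w])
  have low: "- (5 * X / 8 + 65536) \<le> real_of_int (lsum (take t (Zs!j))) \<and> - (5 * X / 8 + 65536) \<le> real_of_int (lsum (drop t (Zs!j)))"
    "4 * X - 96 \<le> real_of_int (lsum (Zs!j))" if "j < r + 2" for j t
  proof -
    have "(- (5 * X / 8 + 65536) \<le> real_of_int (lsum (take t (Zs!j))) \<and> - (5 * X / 8 + 65536) \<le> real_of_int (lsum (drop t (Zs!j))))
       \<and> 4 * X - 96 \<le> real_of_int (lsum (Zs!j))"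
    proof (cases "j = 2 \<or> j = r - 1")
      case True
      then have "Zs ! j \<in> SB w 65536" using SBj[OF that] by simp
      from sbinfo2[OF this w] show ?thesis unfolding X_def by blast
    next
      case False
      then have "Zs ! j \<in> SB w 64" using SBj[OF that] by simp
      from sbinfo64[OF this w] show ?thesis unfolding X_def by blast
    qed
    then show "- (5 * X / 8 + 65536) \<le> real_of_int (lsum (take t (Zs!j))) \<and> - (5 * X / 8 + 65536) \<le> real_of_int (lsum (drop t (Zs!j)))"
      "4 * X - 96 \<le> real_of_int (lsum (Zs!j))" by auto
  qed
  have up64: "real_of_int (lsum (Zs!j)) \<le> 40 * X + 64" if "j < r + 2" "j \<noteq> 2" "j \<noteq> r - 1" for j
  proof -
    have "Zs ! j \<in> SB w 64" using SBj[OF that(1)] that by simp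
    from sbinfo64(3)[OF this w] show ?thesis unfolding X_def .
  qed
  have big: "128 * X - 98304 \<le> real_of_int (lsum (Zs!j))" if "j < r + 2" "j = 2 \<or> j = r - 1" for j
  proof -
    have "Zs ! j \<in> SB w 65536" using SBj[OF that(1)] that by simp
    from sbinfo2(3)[OF this w] show ?thesis unfolding X_def .
  qed
  have win: "Bv w y (k*w+u) = lsum (drop u (Zs!k)) + lsum (Zs!(k+1)) + lsum (take (u+1) (Zs!(k+2)))"
    if "k < r" "u < w" for k u
  proof -
    have "k + 2 < length Zs" using that Zs(2) by simp
    from window[OF lens this that(2)] show ?thesis unfolding Bv_def Zs(1) by simp
  qed
  have wpos: "0 < w" using w by simp
  show "\<forall>p<r*w. sqrt w < real_of_int (Bv w y p)"
  proof (intro allI impI)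
    fix p assume p: "p < r * w"
    define k where "k = p div w"
    define u where "u = p mod w"
    have pk: "p = k * w + u" unfolding k_def u_def by simp
    have k: "k < r" unfolding k_def using p by (simp add: less_mult_imp_div_less)
    have u: "u < w" unfolding u_def using wpos by simp
    have "real_of_int (Bv w y p) = real_of_int (lsum (drop u (Zs!k))) + real_of_int (lsum (Zs!(k+1))) + real_of_int (lsum (take (u+1) (Zs!(k+2))))"
      unfolding pk win[OF k u] by simp
    moreover have "- (5 * X / 8 + 65536) \<le> real_of_int (lsum (drop u (Zs!k)))" using low(1)[of k u] k by simp
    moreover have "4 * X - 96 \<le> real_of_int (lsum (Zs!(k+1)))" using low(2)[of "k+1"] k by simp
    moreover have "- (5 * X / 8 + 65536) \<le> real_of_int (lsum (take (u+1) (Zs!(k+2))))" using low(1)[of "k+2" "u+1"] k by simp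
    ultimately show "sqrt w < real_of_int (Bv w y p)" using X unfolding X_def by linarith
  qed
  show "\<forall>u<w. Bv w y 0 \<le> Bv w y (w+u)"
  proof (intro allI impI)
    fix u assume u: "u < w"
    have e0: "Bv w y 0 = lsum (drop 0 (Zs!0)) + lsum (Zs!1) + lsum (take 1 (Zs!2))"
      using win[of 0 0] r wpos by (simp add: numeral_2_eq_2)
    have e1: "Bv w y (w+u) = lsum (drop u (Zs!1)) + lsum (Zs!2) + lsum (take (u+1) (Zs!3))"
      using win[of 1 u] r u by (simp add: numeral_3_eq_3 numeral_2_eq_2)
    have "\<bar>lsum (take 1 (Zs!2))\<bar> \<le> 1" using lsum_abs[of "take 1 (Zs!2)"] by simp
    then have t1: "real_of_int (lsum (take 1 (Zs!2))) \<le> 1" by simp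
    have a0: "real_of_int (lsum (Zs!0)) \<le> 40 * X + 64" using up64[of 0] r by simp
    have a1: "real_of_int (lsum (Zs!1)) \<le> 40 * X + 64" using up64[of 1] r by simp
    have b1: "- (5 * X / 8 + 65536) \<le> real_of_int (lsum (drop u (Zs!1)))" using low(1)[of 1 u] r by simp
    have b2: "128 * X - 98304 \<le> real_of_int (lsum (Zs!2))" using big[of 2] r by simp
    have b3: "- (5 * X / 8 + 65536) \<le> real_of_int (lsum (take (u+1) (Zs!3)))" using low(1)[of 3 "u+1"] r by simp
    have "real_of_int (Bv w y 0) \<le> real_of_int (Bv w y (w+u))"
      unfolding e0 e1 using t1 a0 a1 b1 b2 b3 X by simp
    then show "Bv w y 0 \<le> Bv w y (w+u)" by simp
  qed
  show "\<forall>u<w. Bv w y (r*w - 1) \<le> Bv w y ((r-2)*w+u)"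
  proof (intro allI impI)
    fix u assume u: "u < w"
    have rw: "r * w - 1 = (r-1) * w + (w - 1)" using r wpos
      by (simp add: diff_mult_distrib)
    have e0: "Bv w y (r*w - 1) = lsum (drop (w-1) (Zs!(r-1))) + lsum (Zs!r) + lsum (take w (Zs!(r+1)))"
      using win[of "r-1" "w-1"] r wpos unfolding rw by simp
    have e1: "Bv w y ((r-2)*w+u) = lsum (drop u (Zs!(r-2))) + lsum (Zs!(r-1)) + lsum (take (u+1) (Zs!r))"
    proof -
      have "Suc (r-2) = r - 1" "Suc (Suc (r-2)) = r" using r by auto
      then show ?thesis using win[of "r-2" u] r u by simp
    qed
    have "\<bar>lsum (drop (w-1) (Zs!(r-1)))\<bar> \<le> 1" using lsum_abs[of "drop (w-1) (Zs!(r-1))"] lens Zs(2) r by simp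
    then have t1: "real_of_int (lsum (drop (w-1) (Zs!(r-1)))) \<le> 1" by simp
    have tw: "take w (Zs!(r+1)) = Zs!(r+1)" using lens Zs(2) by simp
    have a0: "real_of_int (lsum (Zs!r)) \<le> 40 * X + 64" using up64[of r] r by simp
    have a1: "real_of_int (lsum (Zs!(r+1))) \<le> 40 * X + 64" using up64[of "r+1"] r by simp
    have b1: "- (5 * X / 8 + 65536) \<le> real_of_int (lsum (drop u (Zs!(r-2))))" using low(1)[of "r-2" u] r by simp
    have b2: "128 * X - 98304 \<le> real_of_int (lsum (Zs!(r-1)))" using big[of "r-1"] r by simp
    have b3: "- (5 * X / 8 + 65536) \<le> real_of_int (lsum (take (u+1) (Zs!r)))" using low(1)[of r "u+1"] r by simp
    have "real_of_int (Bv w y (r*w - 1)) \<le> real_of_int (Bv w y ((r-2)*w+u))"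
      unfolding e0 e1 tw using t1 a0 a1 b1 b2 b3 X by simp
    then show "Bv w y (r*w - 1) \<le> Bv w y ((r-2)*w+u)" by simp
  qed
qed


lemma lsum_take_drop_sum: "p + m \<le> length y \<Longrightarrow> lsum (take m (drop p y)) = (\<Sum>q\<in>{0..<m}. sg (y ! (p + q)))"
proof (induction m)
  case 0 then show ?case by simp
next
  case (Suc m)
  have "m < length (drop p y)" using Suc.prems by simp
  then have "take (Suc m) (drop p y) = take m (drop p y) @ [drop p y ! m]" by (rule take_Suc_conv_app_nth)
  moreover have "drop p y ! m = y ! (p + m)" using Suc.prems by simp
  ultimately show ?case using Suc by simp
qed

lemma int_interval_image: "{a .. a + int m} = (\<lambda>q. a + int q) ` {0..m}"
proof (rule set_eqI)
  fix j
  show "j \<in> {a .. a + int m} \<longleftrightarrow> j \<in> (\<lambda>q. a + int q) ` {0..m}"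
  proof
    assume "j \<in> {a .. a + int m}"
    then have "j = a + int (nat (j - a))" "nat (j - a) \<in> {0..m}" by auto
    then show "j \<in> (\<lambda>q. a + int q) ` {0..m}" by (rule rev_image_eqI[rotated])
  qed auto
qed

lemma sum_int_interval: "(\<Sum>j\<in>{a .. a + int m}. f j) = (\<Sum>q\<in>{0..m}. f (a + int q))"
proof -
  have "inj_on (\<lambda>q. a + int q) {0..m}" by (rule inj_onI) simp
  then show ?thesis unfolding int_interval_image by (simp add: sum.reindex)
qed

lemma lab_region: assumes "0 < n" "length y \<le> n" "q < length y"
  shows "lab_sign n (y @ z) (int n * k + int q) = sg (y ! q)"
proof -
  have "(int n * k + int q) mod int n = int q" using assms by simp
  then show ?thesis using assms unfolding lab_sign_def sg_def by (simp add: nth_append)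
qed

lemma bias_region: assumes "0 < n" "length y \<le> n" "p + 2 * w < length y"
  shows "bias0 n w (y @ z) (int w + int n * k + int p) = Bv w y p"
proof -
  have iv: "{int w + int n * k + int p - int w .. int w + int n * k + int p + int w} = {int n * k + int p .. int n * k + int p + int (2*w)}"
    by auto
  have "bias0 n w (y @ z) (int w + int n * k + int p) = (\<Sum>q\<in>{0..2*w}. lab_sign n (y @ z) (int n * k + int p + int q))"
    unfolding bias0_def iv sum_int_interval ..
  also have "\<dots> = (\<Sum>q\<in>{0..2*w}. sg (y ! (p + q)))"
  proof (rule sum.cong)
    fix q assume "q \<in> {0..2*w}"
    then have "p + q < length y" using assms by simp
    then show "lab_sign n (y @ z) (int n * k + int p + int q) = sg (y ! (p + q))"
      using lab_region[OF assms(1,2), of "p+q" z k] by (simp add: add.assoc)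
  qed simp
  also have "\<dots> = (\<Sum>q\<in>{0..<2*w+1}. sg (y ! (p + q)))" by (simp add: atLeastLessThanSuc_atLeastAtMost)
  also have "\<dots> = Bv w y p" unfolding Bv_def using assms by (subst lsum_take_drop_sum) simp_all
  finally show ?thesis .
qed


lemma event_from_region:
  assumes n: "0 < n" and R: "length y = (r+2)*w" "(r+2)*w \<le> n" and w: "1 \<le> w" and r: "6 \<le> r"
    and A: "\<forall>p<r*w. sqrt w < real_of_int (Bv w y p)"
    and B: "\<forall>u<w. Bv w y 0 \<le> Bv w y (w+u)"
    and C: "\<forall>u<w. Bv w y (r*w - 1) \<le> Bv w y ((r-2)*w+u)"
  shows "incubator_event n w r (int w + int n * k) (y @ z)"
proof -
  define s where "s = int w + int n * k"
  define xs where "xs = y @ z"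
  define f where "f = Bv w y"
  have bs: "bias0 n w xs (s + int p) = f p" if "p < r * w" for p
    unfolding s_def xs_def f_def using bias_region[OF n, of y p w z k] R that by (simp add: algebra_simps)
  have rw: "6 * w \<le> r * w" using r by simp
  define pa where "pa = arg_min_on f {0..<w}"
  define pe where "pe = arg_min_on f {r*w-w..<r*w}"
  have ne1: "{0..<w} \<noteq> {}" using w by simp
  have ne2: "{r*w-w..<r*w} \<noteq> {}" using w rw by simp
  have pa: "pa < w" "\<And>q. q < w \<Longrightarrow> f pa \<le> f q"
    unfolding pa_def using arg_min_if_finite(1)[OF _ ne1, of f] arg_min_least[OF _ ne1, of _ f] by auto
  have pe: "r*w - w \<le> pe" "pe < r * w" "\<And>q. r*w - w \<le> q \<Longrightarrow> q < r*w \<Longrightarrow> f pe \<le> f q"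
    unfolding pe_def using arg_min_if_finite(1)[OF _ ne2, of f] arg_min_least[OF _ ne2, of _ f] by auto
  define L where "L = pe - pa + 1"
  have pape: "pa < pe" using pa(1) pe(1) rw by arith
  have aL: "s + int pa + int L - 1 = s + int pe" unfolding L_def using pape by simp
  have inc: "x_firewall_incubator n w xs (s + int pa) L"
    unfolding x_firewall_incubator_def
  proof (intro conjI ballI)
    show "2 * (w + 1) \<le> L" unfolding L_def using pa(1) pe(1) rw w by arith
    have "r * w \<le> (r+2)*w" by simp
    then show "L \<le> n" unfolding L_def using pa(1) pe(2) R(2) by arith
  next
    fix i assume i: "i \<in> {s + int pa .. s + int pa + int L - 1}"
    define p where "p = nat (i - s)"
    have ip: "i = s + int p" and pr: "pa \<le> p" "p \<le> pe" using i aL unfolding p_def by auto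
    show "sqrt (real w) < real_of_int (bias0 n w xs i)"
      unfolding ip using bs[of p] A pr pe(2) unfolding f_def by simp
  next
    fix i assume i: "i \<in> {s + int pa .. s + int pa + int w}"
    define p where "p = nat (i - s)"
    have ip: "i = s + int p" and pr: "pa \<le> p" "p \<le> pa + w" using i unfolding p_def by auto
    have plt: "p < r * w" using pr pa(1) rw by arith
    have "f pa \<le> f p"
    proof (cases "p < w")
      case True then show ?thesis using pa(2) by blast
    next
      case False
      have "p - w < w" using False pr pa(1) by arith
      then have "f 0 \<le> f (w + (p - w))" using B unfolding f_def by simp
      moreover have "f pa \<le> f 0" using pa(2)[of 0] w by simp
      ultimately show ?thesis using False by simp
    qed
    then show "bias0 n w xs (s + int pa) \<le> bias0 n w xs i"
      unfolding ip using bs[of p] bs[of pa] plt pa(1) rw by simp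
  next
    fix i assume i: "i \<in> {s + int pa + int L - 1 - int w .. s + int pa + int L - 1}"
    define p where "p = nat (i - s)"
    have pew: "w \<le> pe" using pe(1) rw by arith
    have ip: "i = s + int p" and pr: "pe - w \<le> p" "p \<le> pe" using i pew unfolding p_def aL by auto
    have "f pe \<le> f p"
    proof (cases "r*w - w \<le> p")
      case True then show ?thesis using pe(3) pr pe(2) by simp
    next
      case False
      have q: "(r-2)*w + (p - (r-2)*w) = p" "p - (r-2)*w < w" using False pr pe(1) rw
        by (simp_all add: diff_mult_distrib)
      then have "f (r*w - 1) \<le> f p" using C unfolding f_def by metis
      moreover have "f pe \<le> f (r*w - 1)" using pe(3)[of "r*w - 1"] w rw by simp
      ultimately show ?thesis by simp
    qed
    then show "bias0 n w xs (s + int pa + int L - 1) \<le> bias0 n w xs i"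
      unfolding ip aL using bs[of p] bs[of pe] pr pe(2) by simp
  qed
  show ?thesis unfolding incubator_event_def s_def[symmetric] xs_def[symmetric]
  proof (intro exI conjI)
    show "s + int pa \<in> {s .. s + int w - 1}" using pa by simp
    show "s + int pa + int L - 1 \<in> {s + int (r * w) - int w .. s + int (r * w) - 1}"
    proof -
      have "w \<le> r * w" using r by simp
      then have "int (r * w - w) = int r * int w - int w" by (simp add: of_nat_diff)
      then have "int r * int w - int w \<le> int pe" "int pe < int r * int w" using pe(1,2)
        by (metis of_nat_le_iff, metis of_nat_less_iff of_nat_mult)
      then show ?thesis unfolding aL by simp
    qed
  qed (rule inc)
qed


lemma lab_rot: assumes "length xs = n" "0 < n"
  shows "lab_sign n (rotate d xs) i = lab_sign n xs (i + int d)"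
proof -
  have lt: "nat (i mod int n) < length xs" using assms by (simp add: nat_less_iff)
  have "int ((nat (i mod int n) + d) mod n) = (int (nat (i mod int n)) + int d) mod int n"
    by (simp add: zmod_int)
  also have "\<dots> = (i mod int n + int d) mod int n" using assms by simp
  also have "\<dots> = (i + int d) mod int n" by (simp add: mod_add_left_eq)
  finally have "(nat (i mod int n) + d) mod n = nat ((i + int d) mod int n)" by linarith
  then have "(d + nat (i mod int n)) mod n = nat ((i + int d) mod int n)" by (simp add: add.commute)
  then show ?thesis unfolding lab_sign_def using nth_rotate[OF lt, of d] assms(1) by simp
qed

lemma bias_rot: assumes "length xs = n" "0 < n"
  shows "bias0 n w (rotate d xs) i = bias0 n w xs (i + int d)"
proof -
  have inj: "inj_on (\<lambda>j. j + int d) {i - int w .. i + int w}" by (rule inj_onI) simp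
  have im: "(\<lambda>j. j + int d) ` {i - int w .. i + int w} = {i + int d - int w .. i + int d + int w}"
  proof (rule set_eqI)
    fix x show "x \<in> (\<lambda>j. j + int d) ` {i - int w .. i + int w} \<longleftrightarrow> x \<in> {i + int d - int w .. i + int d + int w}"
    proof
      assume "x \<in> {i + int d - int w .. i + int d + int w}"
      then have "x - int d \<in> {i - int w .. i + int w}" "x = (x - int d) + int d" by auto
      then show "x \<in> (\<lambda>j. j + int d) ` {i - int w .. i + int w}" by (rule rev_image_eqI)
    qed auto
  qed
  have "bias0 n w (rotate d xs) i = (\<Sum>j\<in>{i - int w .. i + int w}. lab_sign n xs (j + int d))"
    unfolding bias0_def using lab_rot[OF assms] by simp
  also have "\<dots> = (\<Sum>j\<in>(\<lambda>j. j + int d) ` {i - int w .. i + int w}. lab_sign n xs j)"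
    using sum.reindex[OF inj, of "lab_sign n xs"] by simp
  also have "\<dots> = bias0 n w xs (i + int d)" unfolding im bias0_def ..
  finally show ?thesis .
qed

lemma inc_rot: assumes "length xs = n" "0 < n" "x_firewall_incubator n w xs (a + int d) L"
  shows "x_firewall_incubator n w (rotate d xs) a L"
proof -
  note br = bias_rot[OF assms(1,2)]
  from assms(3) have h: "2 * (w + 1) \<le> L" "L \<le> n"
    "\<forall>i\<in>{a + int d .. a + int d + int L - 1}. real_of_int (bias0 n w xs i) > sqrt (real w)"
    "\<forall>i\<in>{a + int d .. a + int d + int w}. bias0 n w xs (a + int d) \<le> bias0 n w xs i"
    "\<forall>i\<in>{a + int d + int L - 1 - int w .. a + int d + int L - 1}. bias0 n w xs (a + int d + int L - 1) \<le> bias0 n w xs i"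
    unfolding x_firewall_incubator_def by auto
  show ?thesis unfolding x_firewall_incubator_def
  proof (intro conjI ballI)
    fix i assume "i \<in> {a .. a + int L - 1}"
    then have "i + int d \<in> {a + int d .. a + int d + int L - 1}" by auto
    then show "real_of_int (bias0 n w (rotate d xs) i) > sqrt (real w)" using h(3) br by simp
  next
    fix i assume "i \<in> {a .. a + int w}"
    then have "i + int d \<in> {a + int d .. a + int d + int w}" by auto
    then show "bias0 n w (rotate d xs) a \<le> bias0 n w (rotate d xs) i" using h(4) br by simp
  next
    fix i assume "i \<in> {a + int L - 1 - int w .. a + int L - 1}"
    then have "i + int d \<in> {a + int d + int L - 1 - int w .. a + int d + int L - 1}" by auto
    then have bb: "bias0 n w xs (a + int d + int L - 1) \<le> bias0 n w xs (i + int d)" using h(5) by blast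
    have eq: "a + int L - 1 + int d = a + int d + int L - 1" by simp
    show "bias0 n w (rotate d xs) (a + int L - 1) \<le> bias0 n w (rotate d xs) i" unfolding br eq by (rule bb)
  qed (use h in auto)
qed

lemma event_rot: assumes "length xs = n" "0 < n" "incubator_event n w r (s + int d) xs"
  shows "incubator_event n w r s (rotate d xs)"
proof -
  from assms(3) obtain a L where aL: "a \<in> {s + int d .. s + int d + int w - 1}"
    "a + int L - 1 \<in> {s + int d + int (r * w) - int w .. s + int d + int (r * w) - 1}"
    "x_firewall_incubator n w xs a L" unfolding incubator_event_def by auto
  have "x_firewall_incubator n w xs ((a - int d) + int d) L" using aL(3) by simp
  from inc_rot[OF assms(1,2) this] show ?thesis unfolding incubator_event_def
    by (intro exI[of _ "a - int d"] exI[of _ L]) (use aL in auto)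
qed

lemma rotate_inv: assumes "length xs = n" "0 < n"
  shows "rotate (n - d mod n) (rotate d xs) = xs"
proof -
  define q where "q = d div n"
  define m where "m = d mod n"
  have dm: "d = q * n + m" unfolding q_def m_def by simp
  have mn: "m < n" unfolding m_def using assms(2) by simp
  have e: "n - d mod n + d = n + q * n" unfolding m_def[symmetric] using dm mn by simp
  have "rotate (n - d mod n) (rotate d xs) = rotate (n - d mod n + d) xs" by (simp add: rotate_rotate)
  also have "\<dots> = rotate ((n - d mod n + d) mod length xs) xs" by (rule rotate_conv_mod)
  also have "(n - d mod n + d) mod length xs = 0" unfolding e assms(1) by simp
  finally show ?thesis by simp
qed

lemma rotate_inj: assumes "length xs = n" "length ys = n" "rotate d xs = rotate d ys"
  shows "xs = ys"
proof (cases "n = 0")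
  case True then show ?thesis using assms by simp
next
  case False
  then have "0 < n" by simp
  have "xs = rotate (n - d mod n) (rotate d xs)" using rotate_inv[OF assms(1) \<open>0 < n\<close>] by simp
  also have "\<dots> = rotate (n - d mod n) (rotate d ys)" using assms(3) by simp
  also have "\<dots> = ys" using rotate_inv[OF assms(2) \<open>0 < n\<close>] by simp
  finally show ?thesis .
qed


lemma prob_lower: assumes n: "0 < n" and R: "R \<le> n" and Y: "\<forall>y\<in>Y. length y = R" "finite Y"
  and E: "\<And>y z k. y \<in> Y \<Longrightarrow> incubator_event n w r (int w + int n * k) (y @ z)"
  shows "real (card Y) / 2^R \<le> incubator_prob n w r s"
proof -
  define d where "d = nat ((int w - s) mod int n)"
  have dd: "int d = (int w - s) mod int n" unfolding d_def using n by simp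
  have "(s + int d - int w) mod int n = (s - int w + (int w - s)) mod int n"
    unfolding dd by (metis add_diff_eq diff_add_eq mod_add_right_eq)
  then have "(s + int d - int w) mod int n = 0" by simp
  then obtain k where k: "s + int d = int w + int n * k"
    by (metis add.commute diff_add_cancel dvd_def mod_0_imp_dvd)
  define Es where "Es t = {xs. length xs = n \<and> incubator_event n w r t xs}" for t
  have finE: "finite (Es t)" for t unfolding Es_def by (rule fin_lenP)
  have sub1: "app Y {z. length z = n - R} \<subseteq> Es (s + int d)"
  proof
    fix x assume "x \<in> app Y {z. length z = n - R}"
    then obtain y z where x: "x = y @ z" "y \<in> Y" "length z = n - R" unfolding app_def by blast
    then show "x \<in> Es (s + int d)" unfolding Es_def k using E[of y k z] x Y R by simp
  qed
  have c1: "card (app Y {z. length z = n - R}) = card Y * 2^(n-R)"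
    by (subst card_app[where k=R]) (use Y in \<open>simp_all add: fin_len card_len\<close>)
  have sub2: "rotate d ` Es (s + int d) \<subseteq> Es s"
    unfolding Es_def using event_rot[OF _ n] by auto
  have inj: "inj_on (rotate d) (Es (s + int d))"
    by (rule inj_onI) (use rotate_inj in \<open>auto simp: Es_def\<close>)
  have "card Y * 2^(n-R) \<le> card (Es (s + int d))"
    unfolding c1[symmetric] by (rule card_mono[OF finE sub1])
  also have "\<dots> = card (rotate d ` Es (s + int d))" by (rule card_image[OF inj, symmetric])
  also have "\<dots> \<le> card (Es s)" by (rule card_mono[OF finE sub2])
  finally have "real (card Y) * 2^(n-R) \<le> real (card (Es s))"
    by (metis of_nat_le_iff of_nat_mult of_nat_numeral of_nat_power)
  moreover have "incubator_prob n w r s = real (card (Es s)) / 2^n"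
    unfolding incubator_prob_def Es_def ..
  moreover have "(2::real)^n = 2^R * 2^(n-R)" using R by (simp add: power_add[symmetric])
  ultimately have "real (card Y) * 2^(n-R) \<le> (incubator_prob n w r s * 2^R) * 2^(n-R)"
    by (simp add: field_simps)
  then have "real (card Y) \<le> incubator_prob n w r s * 2^R"
    by (rule mult_right_le_imp_le) simp
  then show ?thesis by (simp add: divide_le_eq)
qed


definition EE :: nat where "EE = 34359738368"

lemma lsum_rep: "lsum (replicate m True) = int m" by (induction m) auto

lemma Bv_rep: "p + (2*w+1) \<le> R \<Longrightarrow> Bv w (replicate R True) p = int (2*w+1)"
  unfolding Bv_def by (simp add: lsum_rep min_def)

lemma tys_set: "set (tys r) \<subseteq> {64, 65536}" unfolding tys_def by auto

theorem proposition2: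
  shows "\<exists>c::real. c > 0 \<and>
    (\<forall>(n::nat) (w::nat) (r::nat) (s::int).
       1 \<le> w \<longrightarrow> 6 \<le> r \<longrightarrow> real r < real n / real w - 2 \<longrightarrow>
       incubator_prob n w r s \<ge> c ^ r)"
proof (intro exI conjI allI impI)
  define c where "c = gam^2 * qq^EE"
  have g: "0 < gam" "gam \<le> 1" using gam_pos gam_le[of 0] by auto
  have q: "0 < qq" "qq \<le> 1" "qq \<le> 1/2" using qq_pos by (auto simp: qq_def)
  have qE: "0 < qq^EE" "qq^EE \<le> 1" using q by (auto simp: power_le_one)
  have g2: "0 < gam^2" "gam^2 \<le> 1" using g by (auto simp: power_le_one)
  show "0 < c" unfolding c_def using qE g2 by simp
  have c1: "c \<le> gam^2" unfolding c_def using qE g2 by (simp add: mult_left_le)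
  have c2: "c \<le> qq^EE" unfolding c_def using qE g2 by (simp add: mult_le_cancel_right1)
  fix n w r :: nat and s :: int
  assume w: "1 \<le> w" and r: "6 \<le> r" and rn: "real r < real n / real w - 2"
  have wp: "0 < real w" using w by simp
  have "(real r + 2) * real w < real n" using rn wp by (simp add: pos_less_divide_eq field_simps)
  then have "real ((r+2)*w) < real n" by (simp add: algebra_simps)
  then have Rn: "(r+2)*w < n" by (simp only: of_nat_less_iff)
  then have n: "0 < n" by simp
  define R where "R = (r+2)*w"
  show "c ^ r \<le> incubator_prob n w r s"
  proof (cases "17179869184 \<le> w")
    case True
    let ?Y = "rset w (tys r)"
    have Yl: "\<forall>y\<in>?Y. length y = R" unfolding R_def using rset_len tys_len by (simp add: mult.commute)
    have E: "incubator_event n w r (int w + int n * k) (y @ z)" if "y \<in> ?Y" for y z k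
    proof -
      note rg = region_good[OF that r True]
      show ?thesis
        by (rule event_from_region[OF n _ _ w r rg]) (use Yl that Rn R_def in auto)
    qed
    have "real (card ?Y) / 2^R \<le> incubator_prob n w r s"
      by (rule prob_lower[OF n _ Yl rset_fin E]) (use Rn R_def in simp_all)
    moreover have "(gam * 2^w)^(r+2) \<le> real (card ?Y)"
    proof (rule rset_card[of "tys r" w, unfolded tys_len])
      show "\<forall>K\<in>set (tys r). 0 < K \<and> K \<le> w \<and> K \<le> 65536"
      proof
        fix K assume "K \<in> set (tys r)"
        then have "K = 64 \<or> K = 65536" using tys_set[of r] by blast
        then show "0 < K \<and> K \<le> w \<and> K \<le> 65536" using True by auto
      qed
    qed
    moreover have "(gam * 2^w)^(r+2) / 2^R = gam^(r+2)"
    proof -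
      have "(2::real)^R = (2^w)^(r+2)" unfolding R_def by (simp only: power_mult[symmetric] mult.commute)
      then have "(gam * 2^w)^(r+2) = gam^(r+2) * (2::real)^R" by (simp only: power_mult_distrib)
      then show ?thesis by (simp only:) (rule nonzero_mult_div_cancel_right, simp)
    qed
    ultimately have "gam^(r+2) \<le> incubator_prob n w r s"
      by (smt (verit) divide_right_mono zero_le_power)
    moreover have "gam^(2*r) \<le> gam^(r+2)" using g r by (intro power_decreasing) auto
    moreover have "c^r \<le> (gam^2)^r" using c1 \<open>0 < c\<close> by (intro power_mono) auto
    ultimately show ?thesis by (simp add: power_mult)
  next
    case False
    let ?Y = "{replicate R True}"
    have Yl: "\<forall>y\<in>?Y. length y = R" by simp
    have E: "incubator_event n w r (int w + int n * k) (y @ z)" if "y \<in> ?Y" for y z k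
    proof -
      have y: "y = replicate R True" using that by simp
      have sw: "sqrt (real w) < real (2*w+1)"
      proof -
        have w1: "1 \<le> real w" using w by simp
        then have "real w * 1 \<le> real w * real w" by (intro mult_left_mono) simp_all
        then have "real w \<le> (real w)^2" by (simp add: power2_eq_square)
        then have "sqrt (real w) \<le> sqrt ((real w)^2)" by (rule real_sqrt_le_mono)
        then have "sqrt (real w) \<le> real w" by simp
        then show ?thesis by simp
      qed
      have A: "\<forall>p<r*w. sqrt w < real_of_int (Bv w y p)"
      proof (intro allI impI)
        fix p assume "p < r * w"
        then have "p + (2*w+1) \<le> R" unfolding R_def by (simp add: algebra_simps)
        then show "sqrt w < real_of_int (Bv w y p)" unfolding y using Bv_rep sw by simp
      qed
      have B: "\<forall>u<w. Bv w y 0 \<le> Bv w y (w+u)"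
      proof (intro allI impI)
        fix u assume u: "u < w"
        have "6 * w \<le> r * w" using r by simp
        moreover have "R = r * w + 2 * w" unfolding R_def by (simp add: algebra_simps)
        ultimately have "w + u + (2*w+1) \<le> R" "0 + (2*w+1) \<le> R" using u by linarith+
        then show "Bv w y 0 \<le> Bv w y (w+u)" unfolding y using Bv_rep by simp
      qed
      have C: "\<forall>u<w. Bv w y (r*w - 1) \<le> Bv w y ((r-2)*w+u)"
      proof (intro allI impI)
        fix u assume u: "u < w"
        have RR: "R = r * w + 2 * w" unfolding R_def by (simp add: algebra_simps)
        have "(r-2)*w + 2 * w = r * w" using r by (simp add: diff_mult_distrib)
        moreover have "w \<le> r * w" using r by simp
        ultimately have "(r-2)*w + u + (2*w+1) \<le> R" "r*w - 1 + (2*w+1) \<le> R" using u w RR by linarith+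
        then show "Bv w y (r*w - 1) \<le> Bv w y ((r-2)*w+u)" unfolding y using Bv_rep by simp
      qed
      show ?thesis by (rule event_from_region[OF n _ _ w r A B C]) (use y Rn R_def in auto)
    qed
    have "real (card ?Y) / 2^R \<le> incubator_prob n w r s"
      by (rule prob_lower[OF n _ Yl _ E]) (use Rn R_def in simp_all)
    then have p1: "(1/2)^R \<le> incubator_prob n w r s" by (simp add: power_one_over)
    have "r + 2 \<le> 2 * r" using r by simp
    then have "(r+2)*w \<le> (2*r)*w" by (rule mult_right_mono) simp
    also have "(2*r)*w \<le> (2*r)*17179869184" using False by (intro mult_left_mono) simp_all
    also have "\<dots> = EE * r" unfolding EE_def by simp
    finally have "R \<le> EE * r" unfolding R_def .
    then have "qq^(EE*r) \<le> qq^R" using q by (intro power_decreasing) auto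
    moreover have "qq^R \<le> (1/2)^R" using q by (intro power_mono) auto
    moreover have "c^r \<le> (qq^EE)^r" using c2 \<open>0 < c\<close> by (intro power_mono) auto
    ultimately show ?thesis using p1 by (simp add: power_mult)
  qed
qed


end
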